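(* Let $G=(V,E)$ be a $k$-uniform cored hypergraph ($k\ge3$) and let $\mathbf x\in\mathbb R^n$ be an H-eigenvector of its Laplacian tensor $\mathcal L$ corresponding to the H-eigenvalue $\lambda(\mathcal L)$. For each $e\in E$ let $i_e\in e$ be a cored vertex. Then $\prod_{s\in e}x_s\le 0$ for all $e\in E$ when $k$ is even, and $\prod_{s\in e\setminus\{i_e\}}x_s\le0$ for all $e\in E$ when $k$ is odd.
   Context: A $k$-uniform hypergraph $G=(V,E)$ has $V=[n]$ and a nonempty set $E$ of $k$-element subsets of $V$; $d_i$ is the number of edges containing $i$. A cored vertex is a vertex of degree one; $G$ is cored if every edge contains a cored vertex. The Laplacian tensor $\mathcal L=\mathcal D-\mathcal A$ ($\mathcal D$ diagonal with entries $d_i$, $\mathcal A$ with entries $\frac1{(k-1)!}$ at index tuples forming an edge and $0$ otherwise) satisfies $(\mathcal L\mathbf x^{k-1})_i=d_ix_i^{k-1}-\sum_{e\in E,\,i\in e}\prod_{s\in e\setminus\{i\}}x_s$. A real $\lambda$ is an H-eigenvalue with H-eigenvector $\mathbf x\neq0$ if $(\mathcal L\mathbf x^{k-1})_i=\lambda x_i^{k-1}$ for all $i$; $\lambda(\mathcal L)$ is the largest H-eigenvalue. *)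

theory Defs
  imports Complex_Main
begin

definition k_uniform_hypergraph :: "nat \<Rightarrow> nat \<Rightarrow> nat set set \<Rightarrow> bool" where
  "k_uniform_hypergraph n k E \<longleftrightarrow> E \<noteq> {} \<and> (\<forall>e\<in>E. e \<subseteq> {1..n} \<and> card e = k)"

definition hdeg :: "nat set set \<Rightarrow> nat \<Rightarrow> nat" where
  "hdeg E i = card {e\<in>E. i \<in> e}"

definition cored_vertex :: "nat set set \<Rightarrow> nat \<Rightarrow> bool" where
  "cored_vertex E i \<longleftrightarrow> hdeg E i = 1"

definition cored :: "nat set set \<Rightarrow> bool" where
  "cored E \<longleftrightarrow> (\<forall>e\<in>E. \<exists>i\<in>e. cored_vertex E i)"

text \<open>(L x^{k-1})_i for the Laplacian tensor L = D - A.\<close>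
definition lap_apply :: "nat \<Rightarrow> nat set set \<Rightarrow> (nat \<Rightarrow> real) \<Rightarrow> nat \<Rightarrow> real" where
  "lap_apply k E x i = real (hdeg E i) * x i ^ (k - 1)
      - (\<Sum>e\<in>{e\<in>E. i \<in> e}. \<Prod>s\<in>e - {i}. x s)"

text \<open>Vectors in R^n are functions nat => real; only the entries 1..n matter.\<close>
definition H_eigenpair :: "nat \<Rightarrow> nat \<Rightarrow> nat set set \<Rightarrow> real \<Rightarrow> (nat \<Rightarrow> real) \<Rightarrow> bool" where
  "H_eigenpair n k E lam x \<longleftrightarrow> (\<exists>i\<in>{1..n}. x i \<noteq> 0) \<and>
     (\<forall>i\<in>{1..n}. lap_apply k E x i = lam * x i ^ (k - 1))"

definition largest_H_eigenvalue :: "nat \<Rightarrow> nat \<Rightarrow> nat set set \<Rightarrow> real" where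
  "largest_H_eigenvalue n k E = Sup {lam. \<exists>x. H_eigenpair n k E lam x}"

end

theory Submission
  imports Defs
begin

lemma fin_E:
  assumes "k_uniform_hypergraph n k E"
  shows "finite E"
proof -
  have "E \<subseteq> Pow {1..n}" using assms unfolding k_uniform_hypergraph_def by auto
  thus ?thesis by (rule finite_subset) simp
qed

lemma eig_bound:
  assumes kk: "k_uniform_hypergraph n k E" and k1: "k \<ge> 1"
    and ep: "H_eigenpair n k E lam y"
  shows "lam \<le> 2 * real (card E)"
proof -
  let ?I = "{1..n::nat}"
  obtain j where j: "j \<in> ?I" "y j \<noteq> 0" using ep unfolding H_eigenpair_def by auto
  have ne: "?I \<noteq> {}" using j by auto
  define M where "M = Max ((\<lambda>j. \<bar>y j\<bar>) ` ?I)"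
  have Min: "M \<in> (\<lambda>j. \<bar>y j\<bar>) ` ?I" unfolding M_def using ne by (intro Max_in) auto
  then obtain i where i: "i \<in> ?I" "\<bar>y i\<bar> = M" by auto
  have Mge: "\<And>s. s \<in> ?I \<Longrightarrow> \<bar>y s\<bar> \<le> M" unfolding M_def by (intro Max_ge) auto
  have Mpos: "M > 0" using Mge[OF j(1)] j(2) by auto
  define D where "D = {e\<in>E. i \<in> e}"
  have finE: "finite E" using fin_E[OF kk] .
  have dD: "hdeg E i = card D" unfolding hdeg_def D_def ..
  have dle: "card D \<le> card E" unfolding D_def using finE by (intro card_mono) auto
  have pb: "\<bar>\<Prod>s\<in>e - {i}. y s\<bar> \<le> M ^ (k - 1)" if "e \<in> D" for e
  proof -
    have e: "e \<subseteq> ?I" "card e = k" "i \<in> e" using that kk unfolding D_def k_uniform_hypergraph_def by auto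
    have fe: "finite e" using e(1) finite_subset by blast
    have ce: "card (e - {i}) = k - 1" using e fe by simp
    have "\<bar>\<Prod>s\<in>e - {i}. y s\<bar> = (\<Prod>s\<in>e - {i}. \<bar>y s\<bar>)" by (rule abs_prod)
    also have "\<dots> \<le> (\<Prod>s\<in>e - {i}. M)" using e(1) Mge by (intro prod_mono) auto
    also have "\<dots> = M ^ (k - 1)" using ce by simp
    finally show ?thesis .
  qed
  have Sb: "\<bar>\<Sum>e\<in>D. \<Prod>s\<in>e - {i}. y s\<bar> \<le> real (card D) * M ^ (k - 1)"
  proof -
    have "\<bar>\<Sum>e\<in>D. \<Prod>s\<in>e - {i}. y s\<bar> \<le> (\<Sum>e\<in>D. \<bar>\<Prod>s\<in>e - {i}. y s\<bar>)" by (rule sum_abs)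
    also have "\<dots> \<le> (\<Sum>e\<in>D. M ^ (k - 1))" using pb by (intro sum_mono) auto
    also have "\<dots> = real (card D) * M ^ (k - 1)" by simp
    finally show ?thesis .
  qed
  have eq: "real (card D) * y i ^ (k - 1) - (\<Sum>e\<in>D. \<Prod>s\<in>e - {i}. y s) = lam * y i ^ (k - 1)"
    using ep i(1) unfolding H_eigenpair_def lap_apply_def D_def hdeg_def by auto
  have "\<bar>lam\<bar> * M ^ (k - 1) = \<bar>lam * y i ^ (k - 1)\<bar>" using i(2) by (simp add: abs_mult power_abs)
  also have "\<dots> \<le> \<bar>real (card D) * y i ^ (k - 1)\<bar> + \<bar>\<Sum>e\<in>D. \<Prod>s\<in>e - {i}. y s\<bar>"
    unfolding eq[symmetric] by (rule abs_triangle_ineq4)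
  also have "\<dots> \<le> real (card D) * M ^ (k - 1) + real (card D) * M ^ (k - 1)"
    using Sb i(2) by (simp add: abs_mult power_abs)
  finally have "\<bar>lam\<bar> * M ^ (k - 1) \<le> (2 * real (card D)) * M ^ (k - 1)" by simp
  moreover have "M ^ (k - 1) > 0" using Mpos by simp
  ultimately have "\<bar>lam\<bar> \<le> 2 * real (card D)" by simp
  thus ?thesis using dle by linarith
qed

lemma one_eig:
  assumes k3: "k \<ge> 3" and kk: "k_uniform_hypergraph n k E"
    and e0: "e0 \<in> E" "i0 \<in> e0" "cored_vertex E i0"
  shows "H_eigenpair n k E 1 (\<lambda>s. if s = i0 then 1 else 0)"
proof -
  let ?x = "(\<lambda>s. if s = i0 then 1 else 0) :: nat \<Rightarrow> real"
  have e0I: "e0 \<subseteq> {1..n}" "card e0 = k" using kk e0 unfolding k_uniform_hypergraph_def by auto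
  have i0I: "i0 \<in> {1..n}" using e0I e0 by auto
  have zero: "(\<Prod>s\<in>e - {i}. ?x s) = 0" if "e \<in> E" "i \<in> e" for e i
  proof -
    have e: "e \<subseteq> {1..n}" "card e = k" using kk that unfolding k_uniform_hypergraph_def by auto
    have fe: "finite e" using e(1) finite_subset by blast
    have "card (e - {i} - {i0}) \<ge> k - 2"
      proof -
      have "card (e - {i}) = k - 1" using e fe that by simp
      moreover have "card (e - {i} - {i0}) \<ge> card (e - {i}) - 1"
        by (metis card_Diff_singleton_if diff_le_self le_refl)
      ultimately show ?thesis by simp
    qed
    hence "card (e - {i} - {i0}) > 0" using k3 by linarith
    hence "e - {i} - {i0} \<noteq> {}" by (metis card.empty less_irrefl)
    then obtain s where "s \<in> e - {i}" "s \<noteq> i0" by auto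
    thus ?thesis using fe by (intro prod_zero) auto
  qed
  show ?thesis unfolding H_eigenpair_def
  proof (intro conjI ballI)
    show "\<exists>i\<in>{1..n}. ?x i \<noteq> 0" using i0I by auto
  next
    fix i assume "i \<in> {1..n}"
    have S0: "(\<Sum>e\<in>{e\<in>E. i \<in> e}. \<Prod>s\<in>e - {i}. ?x s) = 0" using zero by (intro sum.neutral) auto
    show "lap_apply k E ?x i = 1 * ?x i ^ (k - 1)"
    proof (cases "i = i0")
      case True
      then show ?thesis using e0(3) S0 unfolding lap_apply_def cored_vertex_def by simp
    next
      case False
      then show ?thesis using S0 k3 unfolding lap_apply_def by simp
    qed
  qed
qed

theorem proposition3p1:
  fixes n k :: nat and E :: "nat set set" and x :: "nat \<Rightarrow> real"
    and ie :: "nat set \<Rightarrow> nat"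
  assumes "k \<ge> 3"
    and "k_uniform_hypergraph n k E"
    and "cored E"
    and "H_eigenpair n k E (largest_H_eigenvalue n k E) x"
    and "\<forall>e\<in>E. ie e \<in> e \<and> cored_vertex E (ie e)"
  shows "(even k \<longrightarrow> (\<forall>e\<in>E. (\<Prod>s\<in>e. x s) \<le> 0)) \<and>
         (odd k \<longrightarrow> (\<forall>e\<in>E. (\<Prod>s\<in>e - {ie e}. x s) \<le> 0))"
proof -
  note k3 = assms(1) and kk = assms(2) and ep = assms(4)
  let ?lam = "largest_H_eigenvalue n k E"
  obtain e0 where e0: "e0 \<in> E" using kk unfolding k_uniform_hypergraph_def by auto
  have "1 \<in> {lam. \<exists>x. H_eigenpair n k E lam x}"
    using one_eig[OF k3 kk e0] assms(5) e0 by blast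
  moreover have "bdd_above {lam. \<exists>x. H_eigenpair n k E lam x}"
    using eig_bound[OF kk] k3 by (intro bdd_aboveI[where M = "2 * real (card E)"]) auto
  ultimately have lam1: "?lam \<ge> 1" unfolding largest_H_eigenvalue_def by (rule cSup_upper)
  have key: "(\<Prod>s\<in>e - {ie e}. x s) = (1 - ?lam) * x (ie e) ^ (k - 1)" if e: "e \<in> E" for e
  proof -
    let ?i = "ie e"
    have ie: "?i \<in> e" "hdeg E ?i = 1" using assms(5) e unfolding cored_vertex_def by auto
    have iI: "?i \<in> {1..n}" using kk e ie unfolding k_uniform_hypergraph_def by blast
    have "card {e\<in>E. ?i \<in> e} = 1" using ie unfolding hdeg_def by simp
    then obtain a where "{e\<in>E. ?i \<in> e} = {a}" by (auto simp: card_Suc_eq)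
    hence D: "{e\<in>E. ?i \<in> e} = {e}" using e ie by auto
    have "lap_apply k E x ?i = ?lam * x ?i ^ (k - 1)" using ep iI unfolding H_eigenpair_def by auto
    thus ?thesis unfolding lap_apply_def D using ie by (simp add: algebra_simps)
  qed
  show ?thesis
  proof (intro conjI impI ballI)
    fix e assume ev: "even k" and e: "e \<in> E"
    have fe: "finite e" using kk e unfolding k_uniform_hypergraph_def by (meson finite_atLeastAtMost finite_subset)
    have ie: "ie e \<in> e" using assms(5) e by auto
    have "(\<Prod>s\<in>e. x s) = x (ie e) * (\<Prod>s\<in>e - {ie e}. x s)" using fe ie by (rule prod.remove)
    also have "\<dots> = (1 - ?lam) * x (ie e) ^ k" using key[OF e] k3
      proof -
      have "x (ie e) ^ k = x (ie e) * x (ie e) ^ (k - 1)" using k3 by (cases k) auto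
      thus ?thesis using key[OF e] by (simp add: algebra_simps) (metis distrib_left mult.left_commute)
    qed
    also have "\<dots> \<le> 0" using lam1 ev by (intro mult_nonpos_nonneg) auto
    finally show "(\<Prod>s\<in>e. x s) \<le> 0" .
  next
    fix e assume od: "odd k" and e: "e \<in> E"
    have "even (k - 1)" using od k3 by simp
    hence "x (ie e) ^ (k - 1) \<ge> 0" by (simp add: zero_le_even_power)
    thus "(\<Prod>s\<in>e - {ie e}. x s) \<le> 0" using key[OF e] lam1 by (simp add: mult_nonpos_nonneg)
  qed
qed

end
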